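(* In the two-type setting described in the context: (1) if $x_1>1$ and $x_2>1$, then diffusion occurs from a small seed for every $\pi\in(0,1)$; (2) if $x_1\le1$ and $x_2\le1$, then diffusion does not occur from a small seed for any $\pi\in(0,1)$; (3) if exactly one of $x_1,x_2$ exceeds $1$, then there exists $\pi^*\in(0,1)$ such that diffusion occurs from a small seed for every $\pi\in(\pi^*,1)$.
   Context: There are two types $i\in\{1,2\}$, with meeting matrix $\Pi=\begin{pmatrix}\pi&1-\pi\\1-\pi&\pi\end{pmatrix}$, $0<\pi<1$. For each type $i$: $P_i$ is a degree distribution on the nonnegative integers; $w_i(d)>0$ are degree weights; $f_i(d,a)$, $g_i(d,a)$ ($0\le a\le d$) are adoption and abandonment rates satisfying: $f_i(d,0)=0$; $f_i(d,a)$ nondecreasing in $a$; $f_i(d,1)>0$ for some $d$ with $P_i(d)>0$; $g_i(d,0)>0$; $g_i(d,a)$ nonincreasing in $a$. Let $x_i=\sum_dP_i(d)w_i(d)\,d\,\frac{f_i(d,1)}{g_i(d,0)}$ (assumed finite; it is positive) and $A=\begin{pmatrix}\pi x_1&(1-\pi)x_2\\(1-\pi)x_1&\pi x_2\end{pmatrix}$. Diffusion occurs from a small seed means: for every $\varepsilon>0$ there exists $v\in\mathbb{R}^2$ with $0<v_i<\varepsilon$ and $(Av)_i>v_i$ for $i=1,2$. Diffusion within type $i$ when isolated corresponds to $x_i>1$. *)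

theory Defs
  imports Complex_Main
begin

text \<open>Types are indexed by 1 and 2 (natural numbers). For type i:
  P i d  = degree distribution, w i d = degree weight,
  f i d a, g i d a = adoption / abandonment rates (meaningful for a \<le> d).\<close>

definition x_val :: "(nat \<Rightarrow> nat \<Rightarrow> real) \<Rightarrow> (nat \<Rightarrow> nat \<Rightarrow> real)
    \<Rightarrow> (nat \<Rightarrow> nat \<Rightarrow> nat \<Rightarrow> real) \<Rightarrow> (nat \<Rightarrow> nat \<Rightarrow> nat \<Rightarrow> real) \<Rightarrow> nat \<Rightarrow> real" where
  "x_val P w f g i = (\<Sum>d. P i d * w i d * real d * (f i d 1 / g i d 0))"

definition type_data_ok :: "(nat \<Rightarrow> nat \<Rightarrow> real) \<Rightarrow> (nat \<Rightarrow> nat \<Rightarrow> real)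
    \<Rightarrow> (nat \<Rightarrow> nat \<Rightarrow> nat \<Rightarrow> real) \<Rightarrow> (nat \<Rightarrow> nat \<Rightarrow> nat \<Rightarrow> real) \<Rightarrow> nat \<Rightarrow> bool" where
  "type_data_ok P w f g i \<longleftrightarrow>
     (\<forall>d. P i d \<ge> 0) \<and> summable (P i) \<and> (\<Sum>d. P i d) = 1 \<and>
     (\<forall>d. w i d > 0) \<and>
     (\<forall>d. f i d 0 = 0) \<and>
     (\<forall>d a b. a \<le> b \<and> b \<le> d \<longrightarrow> f i d a \<le> f i d b) \<and>
     (\<exists>d. 1 \<le> d \<and> P i d > 0 \<and> f i d 1 > 0) \<and>
     (\<forall>d. g i d 0 > 0) \<and>
     (\<forall>d a b. a \<le> b \<and> b \<le> d \<longrightarrow> g i d b \<le> g i d a) \<and>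
     summable (\<lambda>d. P i d * w i d * real d * (f i d 1 / g i d 0))"

definition A_mat :: "real \<Rightarrow> real \<Rightarrow> real \<Rightarrow> nat \<Rightarrow> nat \<Rightarrow> real" where
  "A_mat p x1 x2 i j =
     (if i = 1 \<and> j = 1 then p * x1 else if i = 1 \<and> j = 2 then (1 - p) * x2
      else if i = 2 \<and> j = 1 then (1 - p) * x1 else p * x2)"

definition diffusion_small_seed :: "real \<Rightarrow> real \<Rightarrow> real \<Rightarrow> bool" where
  "diffusion_small_seed p x1 x2 \<longleftrightarrow>
     (\<forall>\<epsilon>>0. \<exists>v :: nat \<Rightarrow> real. \<forall>i\<in>{1,2}.
        0 < v i \<and> v i < \<epsilon> \<and> (\<Sum>j\<in>{1,2}. A_mat p x1 x2 i j * v j) > v i)"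

end

theory Submission
  imports Defs
begin

lemma x_nonneg:
  assumes "type_data_ok P w f g i"
  shows "x_val P w f g i \<ge> 0"
  unfolding x_val_def
proof (rule suminf_nonneg)
  show "summable (\<lambda>d. P i d * w i d * real d * (f i d 1 / g i d 0))"
    using assms unfolding type_data_ok_def by blast
  fix d
  show "0 \<le> P i d * w i d * real d * (f i d 1 / g i d 0)"
  proof (cases "d = 0")
    case False
    have mono: "\<forall>d a b. a \<le> b \<and> b \<le> d \<longrightarrow> f i d a \<le> f i d b"
      using assms unfolding type_data_ok_def by blast
    have "f i d 0 \<le> f i d 1" using mono[rule_format, of 0 1 d] False by simp
    hence "f i d 1 \<ge> 0" using assms unfolding type_data_ok_def by auto
    moreover have "g i d 0 > 0" "P i d \<ge> 0" "w i d > 0"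
      using assms unfolding type_data_ok_def by auto
    ultimately show ?thesis by simp
  qed simp
qed

lemma key:
  fixes x y p e :: real
  assumes "x > 1" "0 \<le> y" "y \<le> 1" "p * x > 1" "p < 1" "e > 0"
  shows "\<exists>v1 v2. 0 < v1 \<and> v1 < e \<and> 0 < v2 \<and> v2 < e \<and>
     p * x * v1 + (1 - p) * y * v2 > v1 \<and> (1 - p) * x * v1 + p * y * v2 > v2"
proof -
  define v1 where "v1 = e / (2 * (1 + x))"
  define v2 where "v2 = (1 - p) * x * v1 / 2"
  have v1: "0 < v1" "v1 < e" using assms by (auto simp: v1_def field_simps add_pos_pos)
  have p0: "p > 0"
  proof (rule ccontr)
    assume "\<not> p > 0"
    hence "p * x \<le> 0" using assms by (simp add: mult_nonpos_nonneg)
    thus False using assms by linarith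
  qed
  have v2: "0 < v2" unfolding v2_def using assms v1 by (intro divide_pos_pos mult_pos_pos) auto
  have xv1: "x * v1 > 0" using assms v1 by simp
  have "v2 = ((1-p)/2) * (x * v1)" by (simp add: v2_def)
  also have "\<dots> < 1 * (x * v1)" using p0 xv1 by (intro mult_strict_right_mono) auto
  finally have "v2 < x * v1" by simp
  have xv: "x * v1 < e" using assms by (simp add: v1_def field_simps add_pos_pos mult_pos_pos)
  have i1: "p * x * v1 + (1 - p) * y * v2 > v1"
  proof -
    have "(1 - p) * y * v2 \<ge> 0" using assms v2 by simp
    moreover have "p * x * v1 > v1" using assms v1 by simp
    ultimately show ?thesis by linarith
  qed
  have i2: "(1 - p) * x * v1 + p * y * v2 > v2"
  proof -
    have "p * y \<le> p" using assms p0 by (simp add: mult_left_le)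
    hence "p * y * v2 \<le> p * v2" using v2 by (simp add: mult_right_mono)
    moreover have "(1 - p) * x * v1 = 2 * v2" by (simp add: v2_def)
    moreover have "p * v2 \<ge> 0" using p0 v2 by simp
    moreover have "p * y * v2 \<ge> 0" using p0 v2 assms by simp
    ultimately show ?thesis using v2 by linarith
  qed
  show ?thesis using v1 v2 \<open>v2 < x * v1\<close> xv i1 i2 by (intro exI[of _ v1] exI[of _ v2]) auto
qed

lemma sum12: "(\<Sum>j\<in>{1,2::nat}. h j) = h 1 + (h 2 :: real)" by simp

lemma diff_iff: "diffusion_small_seed p x1 x2 \<longleftrightarrow>
   (\<forall>e>0. \<exists>v1 v2. 0 < v1 \<and> v1 < e \<and> 0 < v2 \<and> v2 < e \<and>
      p * x1 * v1 + (1 - p) * x2 * v2 > v1 \<and> (1 - p) * x1 * v1 + p * x2 * v2 > v2)"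
  unfolding diffusion_small_seed_def
proof (intro iffI allI impI)
  fix e :: real assume H: "\<forall>\<epsilon>>0. \<exists>v :: nat \<Rightarrow> real. \<forall>i\<in>{1,2}.
        0 < v i \<and> v i < \<epsilon> \<and> (\<Sum>j\<in>{1,2}. A_mat p x1 x2 i j * v j) > v i" and e: "e > 0"
  then obtain v :: "nat \<Rightarrow> real" where v: "\<forall>i\<in>{1,2}.
        0 < v i \<and> v i < e \<and> (\<Sum>j\<in>{1,2}. A_mat p x1 x2 i j * v j) > v i" by blast
  show "\<exists>v1 v2. 0 < v1 \<and> v1 < e \<and> 0 < v2 \<and> v2 < e \<and>
      p * x1 * v1 + (1 - p) * x2 * v2 > v1 \<and> (1 - p) * x1 * v1 + p * x2 * v2 > v2"
    using v by (intro exI[of _ "v 1"] exI[of _ "v 2"]) (auto simp: A_mat_def)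
next
  fix e :: real assume H: "\<forall>e>0. \<exists>v1 v2. 0 < v1 \<and> v1 < e \<and> 0 < v2 \<and> v2 < e \<and>
      p * x1 * v1 + (1 - p) * x2 * v2 > v1 \<and> (1 - p) * x1 * v1 + p * x2 * v2 > v2" and e: "e > 0"
  then obtain v1 v2 where v: "0 < v1 \<and> v1 < e \<and> 0 < v2 \<and> v2 < e \<and>
      p * x1 * v1 + (1 - p) * x2 * v2 > v1 \<and> (1 - p) * x1 * v1 + p * x2 * v2 > v2" by blast
  show "\<exists>v :: nat \<Rightarrow> real. \<forall>i\<in>{1,2}.
        0 < v i \<and> v i < e \<and> (\<Sum>j\<in>{1,2}. A_mat p x1 x2 i j * v j) > v i"
    using v by (intro exI[of _ "\<lambda>i. if i = 1 then v1 else v2"]) (auto simp: A_mat_def)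
qed

theorem corollary2:
  fixes P w :: "nat \<Rightarrow> nat \<Rightarrow> real"
    and f g :: "nat \<Rightarrow> nat \<Rightarrow> nat \<Rightarrow> real"
  assumes "type_data_ok P w f g 1" and "type_data_ok P w f g 2"
  defines "x1 \<equiv> x_val P w f g 1" and "x2 \<equiv> x_val P w f g 2"
  shows "(x1 > 1 \<and> x2 > 1 \<longrightarrow> (\<forall>p\<in>{0<..<1}. diffusion_small_seed p x1 x2))
       \<and> (x1 \<le> 1 \<and> x2 \<le> 1 \<longrightarrow> (\<forall>p\<in>{0<..<1}. \<not> diffusion_small_seed p x1 x2))
       \<and> ((x1 > 1) \<noteq> (x2 > 1) \<longrightarrow>
            (\<exists>pstar\<in>{0<..<1::real}. \<forall>p\<in>{pstar<..<1}. diffusion_small_seed p x1 x2))"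
proof (intro conjI impI ballI)
  have n1: "x1 \<ge> 0" and n2: "x2 \<ge> 0" using x_nonneg assms by auto
  {
    fix p :: real assume p: "p \<in> {0<..<1}" and h: "x1 > 1 \<and> x2 > 1"
    show "diffusion_small_seed p x1 x2" unfolding diff_iff
    proof (intro allI impI)
      fix e :: real assume e: "e > 0"
      have a: "p * x1 * (e/2) + (1 - p) * x2 * (e/2) > e/2"
      proof -
        have "p * x1 * (e/2) + (1 - p) * x2 * (e/2) = (p * x1 + (1-p) * x2) * (e/2)"
          by (simp add: distrib_right)
        moreover have "p * x1 + (1-p) * x2 > 1"
        proof -
          have "(p)*x1 > (p)*1" "(1-p)*x2 > (1-p)*1" using p h by (auto intro!: mult_strict_left_mono)
          thus ?thesis by (simp add: algebra_simps)
        qed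
        ultimately show ?thesis using e by simp
      qed
      have b: "(1 - p) * x1 * (e/2) + p * x2 * (e/2) > e/2"
      proof -
        have "(1 - p) * x1 * (e/2) + p * x2 * (e/2) = ((1-p) * x1 + p * x2) * (e/2)"
          by (simp add: distrib_right)
        moreover have "(1-p) * x1 + p * x2 > 1"
        proof -
          have "(1-p)*x1 > (1-p)*1" "(p)*x2 > (p)*1" using p h by (auto intro!: mult_strict_left_mono)
          thus ?thesis by (simp add: algebra_simps)
        qed
        ultimately show ?thesis using e by simp
      qed
      show "\<exists>v1 v2. 0 < v1 \<and> v1 < e \<and> 0 < v2 \<and> v2 < e \<and>
        p * x1 * v1 + (1 - p) * x2 * v2 > v1 \<and> (1 - p) * x1 * v1 + p * x2 * v2 > v2"
        using a b e by (intro exI[of _ "e/2"]) auto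
    qed
  }
  {
    fix p :: real assume p: "p \<in> {0<..<1}" and h: "x1 \<le> 1 \<and> x2 \<le> 1"
    show "\<not> diffusion_small_seed p x1 x2"
    proof
      assume "diffusion_small_seed p x1 x2"
      then obtain v1 v2 where v: "0 < v1" "0 < v2"
        "p * x1 * v1 + (1 - p) * x2 * v2 > v1" "(1 - p) * x1 * v1 + p * x2 * v2 > v2"
        unfolding diff_iff by (meson zero_less_one)
      have "x1 * v1 + x2 * v2 > v1 + v2" using v(3,4) by (simp add: algebra_simps)
      moreover have "x1 * v1 \<le> v1" "x2 * v2 \<le> v2" using h v by (simp_all add: mult_left_le_one_le)
      ultimately show False by linarith
    qed
  }
  assume h: "(x1 > 1) \<noteq> (x2 > 1)"
  show "\<exists>pstar\<in>{0<..<1::real}. \<forall>p\<in>{pstar<..<1}. diffusion_small_seed p x1 x2"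
  proof (cases "x1 > 1")
    case True
    hence x2: "x2 \<le> 1" using h by auto
    show ?thesis
    proof (rule bexI[where x="1/x1"], intro ballI)
      fix p assume p: "p \<in> {1/x1<..<1}"
      have px: "p * x1 > 1" using p True by (simp add: field_simps)
      show "diffusion_small_seed p x1 x2" unfolding diff_iff
        using p by (intro allI impI key[OF True n2 x2 px]) auto
    next
      have "0 < 1/x1" using True by (intro divide_pos_pos) auto
      moreover have "1/x1 < 1" using True by (subst divide_less_eq) auto
      ultimately show "1/x1 \<in> {0<..<1::real}" by (rule greaterThanLessThan_iff[THEN iffD2, OF conjI])
    qed
  next
    case False
    hence x2: "x2 > 1" and x1: "x1 \<le> 1" using h by auto
    show ?thesis
    proof (rule bexI[where x="1/x2"], intro ballI)
      fix p assume p: "p \<in> {1/x2<..<1}"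
      have px: "p * x2 > 1" using p x2 by (simp add: field_simps)
      show "diffusion_small_seed p x1 x2" unfolding diff_iff
      proof (intro allI impI)
        fix e :: real assume "e > 0"
        from key[OF x2 n1 x1 px _ this] p obtain a b where
          "0 < a \<and> a < e \<and> 0 < b \<and> b < e \<and>
     p * x2 * a + (1 - p) * x1 * b > a \<and> (1 - p) * x2 * a + p * x1 * b > b" by auto
        thus "\<exists>v1 v2. 0 < v1 \<and> v1 < e \<and> 0 < v2 \<and> v2 < e \<and>
          p * x1 * v1 + (1 - p) * x2 * v2 > v1 \<and> (1 - p) * x1 * v1 + p * x2 * v2 > v2"
          by (intro exI[of _ b] exI[of _ a]) linarith
      qed
    next
      have "0 < 1/x2" using x2 by (intro divide_pos_pos) auto
      moreover have "1/x2 < 1" using x2 by (subst divide_less_eq) auto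
      ultimately show "1/x2 \<in> {0<..<1::real}" by (rule greaterThanLessThan_iff[THEN iffD2, OF conjI])
    qed
  qed
qed

end
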